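(* Let $f$ be a non-negative multiplicative arithmetic function, let $\tau>0$ and let $B_f$ be any real constant; define $E_f(x)$ for $x\ge1$ by $$\sum_{n\le x}\frac{\Lambda_f(n)}{n}=\tau\log x+B_f+E_f(x).$$ Suppose there exist constants $D_-,D_+,x_0$ such that for every $x\ge x_0$, $$D_-\mu_f(x)\le B_f\mu_f(x)+\sum_{n\le x}\frac{f(n)}{n}E_f\!\left(\frac xn\right)\le D_+\mu_f(x).$$ Then for every $x>\max\{x_0,\exp(D_+)\}$, $$\frac{C_f}{\tau}\log^\tau x\,\frac{\left(1-\frac{D_+}{\log x}\right)^{\tau+1}}{1-\frac{D_-}{\log x}}\le\mu_f(x)\le\frac{C_f}{\tau}\log^\tau x\,\frac{\left(1-\frac{D_-}{\log x}\right)^{\tau+1}}{1-\frac{D_+}{\log x}},$$ where $C_f:=\frac1{\Gamma(\tau)}\lim_{s\to1+0}(s-1)^\tau L_f(s)$.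
   Context: For a multiplicative $f$ (so $f(1)=1$): $L_f(s)=\sum_{n\ge1}f(n)n^{-s}$; $\mu_f(x)=\sum_{n\le x}f(n)/n$; $\Lambda_f$ is defined by $f(n)\log n=\sum_{d\mid n}f(d)\Lambda_f(n/d)$ for all $n\ge1$ (equivalently $-L_f'/L_f=\sum_n\Lambda_f(n)n^{-s}$ as formal Dirichlet series). $\Gamma$ is the gamma function. *)

theory Defs
  imports "HOL-Analysis.Analysis"
begin

definition multiplicative :: "(nat \<Rightarrow> real) \<Rightarrow> bool" where
  "multiplicative f \<longleftrightarrow> f 1 = 1 \<and> (\<forall>m n. coprime m n \<longrightarrow> f (m * n) = f m * f n)"

definition Lser :: "(nat \<Rightarrow> real) \<Rightarrow> real \<Rightarrow> real" where
  "Lser f s = (\<Sum>n. f (Suc n) / (real (Suc n)) powr s)"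

definition muf :: "(nat \<Rightarrow> real) \<Rightarrow> real \<Rightarrow> real" where
  "muf f x = (\<Sum>n\<in>{1..nat \<lfloor>x\<rfloor>}. f n / real n)"

definition Ef :: "(nat \<Rightarrow> real) \<Rightarrow> real \<Rightarrow> real \<Rightarrow> real \<Rightarrow> real" where
  "Ef Lam tau B x = (\<Sum>n\<in>{1..nat \<lfloor>x\<rfloor>}. Lam n / real n) - tau * ln x - B"

end

theory Submission
  imports Defs "HOL-Real_Asymp.Real_Asymp"
begin

lemma nat_floor_div:
  assumes "x \<ge> 0" "d > 0"
  shows "nat \<lfloor>x / real d\<rfloor> = nat \<lfloor>x\<rfloor> div d"
proof -
  have "\<lfloor>x / real_of_int (int d)\<rfloor> = \<lfloor>x\<rfloor> div int d"
    by (rule floor_divide_real_eq_div) simp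
  then have "\<lfloor>x / real d\<rfloor> = \<lfloor>x\<rfloor> div int d" by simp
  then show ?thesis using assms by (simp add: nat_div_distrib)
qed

lemma hyperbola:
  fixes f Lam :: "nat \<Rightarrow> real"
  assumes Lam: "\<forall>n\<ge>1. f n * ln (real n) = (\<Sum>d | d dvd n. f d * Lam (n div d))"
  shows "(\<Sum>n\<in>{1..N}. f n / real n * ln (real n)) =
         (\<Sum>d\<in>{1..N}. f d / real d * (\<Sum>m\<in>{1..N div d}. Lam m / real m))"
proof -
  have "(\<Sum>n\<in>{1..N}. f n / real n * ln (real n)) =
        (\<Sum>n\<in>{1..N}. \<Sum>d\<in>{d. d dvd n}. f d * Lam (n div d) / real n)"
    by (intro sum.cong refl) (simp add: Lam sum_divide_distrib[symmetric])
  also have "\<dots> = (\<Sum>(n,d)\<in>Sigma {1..N} (\<lambda>n. {d. d dvd n}). f d * Lam (n div d) / real n)"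
    by (rule sum.Sigma) (auto intro: finite_divisors_nat)
  also have "\<dots> = (\<Sum>(d,m)\<in>Sigma {1..N} (\<lambda>d. {1..N div d}). f d / real d * (Lam m / real m))"
  proof (rule sum.reindex_bij_witness[where i = "\<lambda>(d,m). (d*m, d)" and j = "\<lambda>(n,d). (d, n div d)"])
    fix b assume "b \<in> Sigma {1..N} (\<lambda>n. {d. d dvd n})"
    then obtain n d where b: "b = (n,d)" "1 \<le> n" "n \<le> N" "d dvd n" by auto
    have dn: "d \<le> n" using b by (intro dvd_imp_le) auto
    have "d \<noteq> 0" using b by (intro notI) simp
    then have "d \<ge> 1" by simp
    moreover have "n div d \<ge> 1"
    proof -
      have "0 < n div d" using \<open>d\<ge>1\<close> dn by (simp add: div_greater_zero_iff)
      then show ?thesis by simp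
    qed
    moreover have "d \<le> N" using b dn by linarith
    moreover have "n div d \<le> N div d" using b by (simp add: div_le_mono)
    ultimately show "(case case b of (n, d) \<Rightarrow> (d, n div d) of (d, m) \<Rightarrow> (d * m, d)) = b"
       "(case b of (n, d) \<Rightarrow> (d, n div d)) \<in> Sigma {1..N} (\<lambda>d. {1..N div d})"
       "(case case b of (n, d) \<Rightarrow> (d, n div d) of (d, m) \<Rightarrow> f d / real d * (Lam m / real m)) =
        (case b of (n, d) \<Rightarrow> f d * Lam (n div d) / real n)"
      using b by auto
  next
    fix a assume "a \<in> Sigma {1..N} (\<lambda>d. {1..N div d})"
    then obtain d m where a: "a = (d,m)" "1 \<le> d" "d \<le> N" "1 \<le> m" "m \<le> N div d" by auto
    then have "d * m \<le> N" by (meson dual_order.trans mult_le_mono2 times_div_less_eq_dividend)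
    moreover have "d*m \<ge> 1" using a by simp
    ultimately show "(case case a of (d, m) \<Rightarrow> (d * m, d) of (n, d) \<Rightarrow> (d, n div d)) = a"
      "(case a of (d, m) \<Rightarrow> (d * m, d)) \<in> Sigma {1..N} (\<lambda>n. {d. d dvd n})"
      using a by auto
  qed
  also have "\<dots> = (\<Sum>d\<in>{1..N}. \<Sum>m\<in>{1..N div d}. f d / real d * (Lam m / real m))"
    by (rule sum.Sigma[symmetric]) auto
  also have "\<dots> = (\<Sum>d\<in>{1..N}. f d / real d * (\<Sum>m\<in>{1..N div d}. Lam m / real m))"
    by (simp add: sum_distrib_left)
  finally show ?thesis .
qed

lemma nat_le_floor: "n \<le> nat \<lfloor>x\<rfloor> \<Longrightarrow> x \<ge> 0 \<Longrightarrow> real n \<le> x"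
proof -
  assume a: "n \<le> nat \<lfloor>x\<rfloor>" "x \<ge> 0"
  then have "int n \<le> \<lfloor>x\<rfloor>" by (simp add: le_nat_iff)
  then have "real_of_int (int n) \<le> x" by (simp only: le_floor_iff)
  then show ?thesis by simp
qed

lemma one_le_nat_floor: "1 \<le> x \<Longrightarrow> 1 \<le> nat \<lfloor>x\<rfloor>"
  by (metis nat_mono nat_one_as_int one_le_floor)

lemma mu_ge1:
  assumes nonneg: "\<forall>n. f n \<ge> 0" and f1: "f 1 = 1" and x: "x \<ge> 1"
  shows "muf f x \<ge> 1"
proof -
  have "1 \<in> {1..nat \<lfloor>x\<rfloor>}" using x one_le_nat_floor[of x] by auto
  then have "f 1 / real 1 \<le> muf f x" unfolding muf_def
    by (intro member_le_sum) (auto simp: nonneg)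
  then show ?thesis using f1 by simp
qed

lemma mu_mono:
  assumes nonneg: "\<forall>n. f n \<ge> 0" and xy: "x \<le> y"
  shows "muf f x \<le> muf f y"
  unfolding muf_def
proof (rule sum_mono2)
  have "nat \<lfloor>x\<rfloor> \<le> nat \<lfloor>y\<rfloor>" by (intro nat_mono floor_mono xy)
  then show "{1..nat \<lfloor>x\<rfloor>} \<subseteq> {1..nat \<lfloor>y\<rfloor>}" by auto
qed (auto simp: nonneg)

lemma mu_nonneg:
  assumes nonneg: "\<forall>n. f n \<ge> 0"
  shows "muf f x \<ge> 0"
  unfolding muf_def by (intro sum_nonneg) (auto simp: nonneg)

definition II :: "(nat \<Rightarrow> real) \<Rightarrow> real \<Rightarrow> real" where
  "II f x = (\<Sum>n\<in>{1..nat \<lfloor>x\<rfloor>}. f n / real n * (ln x - ln (real n)))"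

lemma II_pos:
  assumes nonneg: "\<forall>n. f n \<ge> 0" and f1: "f 1 = 1" and x: "x > 1"
  shows "II f x > 0"
proof -
  have "1 \<in> {1..nat \<lfloor>x\<rfloor>}" using x one_le_nat_floor[of x] by auto
  moreover have "0 \<le> f n / real n * (ln x - ln (real n))" if "n \<in> {1..nat \<lfloor>x\<rfloor>}" for n
  proof -
    have "real n \<le> x" using that x by (intro nat_le_floor) auto
    then have "ln (real n) \<le> ln x" using that by auto
    then show ?thesis using nonneg by auto
  qed
  ultimately have "f 1 / real 1 * (ln x - ln (real 1)) \<le> II f x" unfolding II_def
    by (intro member_le_sum) auto
  then show ?thesis using f1 ln_gt_zero[OF x] by simp
qed

lemma II_max_form:
  assumes x1: "1 \<le> x" and xz: "x \<le> z"
  shows "II f x = (\<Sum>n\<in>{1..nat \<lfloor>z\<rfloor>}. f n / real n * max 0 (ln x - ln (real n)))"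
proof -
  have "nat \<lfloor>x\<rfloor> \<le> nat \<lfloor>z\<rfloor>" by (intro nat_mono floor_mono xz)
  then have sub: "{1..nat \<lfloor>x\<rfloor>} \<subseteq> {1..nat \<lfloor>z\<rfloor>}" by auto
  have "(\<Sum>n\<in>{1..nat \<lfloor>z\<rfloor>}. f n / real n * max 0 (ln x - ln (real n))) =
        (\<Sum>n\<in>{1..nat \<lfloor>x\<rfloor>}. f n / real n * max 0 (ln x - ln (real n)))"
  proof (rule sum.mono_neutral_right[OF _ sub])
    show "\<forall>i\<in>{1..nat \<lfloor>z\<rfloor>} - {1..nat \<lfloor>x\<rfloor>}. f i / real i * max 0 (ln x - ln (real i)) = 0"
    proof
      fix i assume i: "i \<in> {1..nat \<lfloor>z\<rfloor>} - {1..nat \<lfloor>x\<rfloor>}"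
      then have "nat \<lfloor>x\<rfloor> < i" by auto
      then have "\<lfloor>x\<rfloor> < int i" using x1 by (simp add: nat_less_iff)
      then have "x < real i" by (metis floor_less_iff of_int_of_nat_eq)
      then have "ln x < ln (real i)" using x1 by auto
      then show "f i / real i * max 0 (ln x - ln (real i)) = 0" by simp
    qed
  qed simp
  also have "\<dots> = II f x" unfolding II_def
  proof (intro sum.cong refl)
    fix n assume "n \<in> {1..nat \<lfloor>x\<rfloor>}"
    then have "real n \<le> x" using x1 by (intro nat_le_floor) auto
    then have "ln (real n) \<le> ln x" using \<open>n \<in> _\<close> by auto
    then show "f n / real n * max 0 (ln x - ln (real n)) = f n / real n * (ln x - ln (real n))" by simp
  qed
  finally show ?thesis by simp
qed

lemma II_cont:
  assumes "1 \<le> y"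
  shows "continuous_on {y..z} (II f)"
proof -
  have "continuous_on {y..z} (\<lambda>x. \<Sum>n\<in>{1..nat \<lfloor>z\<rfloor>}. f n / real n * max 0 (ln x - ln (real n)))"
    using assms by (intro continuous_intros) auto
  then show ?thesis
    by (rule continuous_on_cong[THEN iffD1, rotated 2]) (use assms II_max_form in auto)
qed

lemma II_deriv:
  assumes x1: "x > 1" and nonint: "real (nat \<lfloor>x\<rfloor>) < x"
  shows "(II f has_real_derivative muf f x / x) (at x)"
proof -
  define N where "N = nat \<lfloor>x\<rfloor>"
  have xN: "x < real N + 1" unfolding N_def using x1 by linarith
  have fl: "nat \<lfloor>t\<rfloor> = N" if "real N < t" "t < real N + 1" for t
    using that by (simp add: N_def) linarith
  have "((\<lambda>t. \<Sum>n\<in>{1..N}. f n / real n * (ln t - ln (real n))) has_real_derivative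
        (\<Sum>n\<in>{1..N}. f n / real n * (1 / x))) (at x)"
    using x1 by (auto intro!: derivative_eq_intros DERIV_sum)
  moreover have "(\<Sum>n\<in>{1..N}. f n / real n * (1 / x)) = muf f x / x"
    by (simp add: muf_def N_def sum_divide_distrib)
  ultimately have "((\<lambda>t. \<Sum>n\<in>{1..N}. f n / real n * (ln t - ln (real n))) has_real_derivative
        muf f x / x) (at x)" by simp
  then show ?thesis
  proof (rule has_field_derivative_transform_within_open[where S = "{real N <..< real N + 1}"], goal_cases)
    case 1 show ?case by simp
  next
    case 2 show ?case using nonint xN by (simp add: N_def)
  next
    case (3 t) then show ?case using fl[of t] by (simp add: II_def)
  qed
qed

lemma deriv_sign_dec:
  fixes x I L m p :: real
  assumes "x > 0" "I > 0" "L > 0" "m * L \<le> p * I"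
  shows "m / x / I - p * (1 / x / L) \<le> 0"
proof -
  have "m / x / I - p * (1 / x / L) = (m * L - p * I) / (x * I * L)"
    using assms by (simp add: field_simps)
  also have "\<dots> \<le> 0" using assms by (intro divide_nonpos_pos) auto
  finally show ?thesis .
qed

lemma deriv_sign_inc:
  fixes x I L m p :: real
  assumes "x > 0" "I > 0" "L > 0" "m * L \<ge> p * I"
  shows "m / x / I - p * (1 / x / L) \<ge> 0"
proof -
  have "m / x / I - p * (1 / x / L) = (m * L - p * I) / (x * I * L)"
    using assms by (simp add: field_simps)
  also have "\<dots> \<ge> 0" using assms by (intro divide_nonneg_pos) auto
  finally show ?thesis .
qed

lemma phi_mono:
  fixes f :: "nat \<Rightarrow> real" and p D a0 y z :: real
  assumes nonneg: "\<forall>n. f n \<ge> 0" and f1: "f 1 = 1" and a0: "a0 \<ge> 1"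
    and aD: "\<And>x. x > a0 \<Longrightarrow> ln x > D"
    and sgn: "\<And>x. x > a0 \<Longrightarrow> muf f x / x / II f x - p * (1 / x / (ln x - D)) \<le> 0"
    and y: "a0 < y" and yz: "y \<le> z"
  shows "ln (II f z) - p * ln (ln z - D) \<le> ln (II f y) - p * ln (ln y - D)"
proof -
  define phi where "phi = (\<lambda>x. ln (II f x) - p * ln (ln x - D))"
  define phi' where "phi' = (\<lambda>x. muf f x / x / II f x - p * (1 / x / (ln x - D)))"
  define S where "S = real ` {0..nat \<lceil>z\<rceil>}"
  have int: "(phi' has_integral (phi z - phi y)) {y..z}"
  proof (rule fundamental_theorem_of_calculus_strong[of S])
    show "finite S" by (simp add: S_def)
    show "y \<le> z" by fact
  next
    fix x assume x: "x \<in> {y..z} - S"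
    then have x1: "x > 1" "x > a0" using y a0 by auto
    have "real (nat \<lfloor>x\<rfloor>) \<le> x" using x1 by (intro nat_le_floor) auto
    moreover have "x \<le> z" using x by simp
    then have "\<lfloor>x\<rfloor> \<le> \<lceil>z\<rceil>" using floor_mono[of x z] floor_le_ceiling[of z] by linarith
    then have "nat \<lfloor>x\<rfloor> \<in> {0..nat \<lceil>z\<rceil>}" by (simp add: nat_mono)
    then have "real (nat \<lfloor>x\<rfloor>) \<noteq> x" using x unfolding S_def by (metis Diff_iff image_eqI)
    ultimately have nonint: "real (nat \<lfloor>x\<rfloor>) < x" by (rule order_le_neq_trans)
    have d: "(II f has_real_derivative muf f x / x) (at x)" by (rule II_deriv[OF x1(1) nonint])
    have "II f x > 0" using II_pos[OF nonneg f1 x1(1)] .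
    moreover have "ln x - D > 0" using aD[OF x1(2)] by simp
    ultimately have "(phi has_real_derivative phi' x) (at x)"
      unfolding phi_def phi'_def using x1
      by (auto intro!: derivative_eq_intros d simp: mult.commute)
    then show "(phi has_vector_derivative phi' x) (at x)"
      by (simp add: has_real_derivative_iff_has_vector_derivative)
  next
    have c: "continuous_on {y..z} (II f)" using II_cont[of y z f] y a0 by simp
    have pos: "II f x > 0 \<and> ln x - D > 0 \<and> x > 0" if xx: "x \<in> {y..z}" for x
    proof -
      have "x > a0" using xx y by simp
      moreover have "x > 1" using \<open>x > a0\<close> a0 by simp
      ultimately show ?thesis using II_pos[OF nonneg f1 \<open>x > 1\<close>] aD[OF \<open>x > a0\<close>] by simp
    qed
    have c1: "continuous_on {y..z} (\<lambda>x. ln (II f x))"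
      apply (rule continuous_on_ln[OF c]) using pos by force
    have c0: "continuous_on {y..z} (\<lambda>x. ln x)"
      apply (rule continuous_on_ln[OF continuous_on_id]) using pos by force
    have c2: "continuous_on {y..z} (\<lambda>x. ln (ln x - D))"
      apply (rule continuous_on_ln[OF continuous_on_diff[OF c0 continuous_on_const]]) using pos by force
    show "continuous_on {y..z} phi" unfolding phi_def
      by (intro continuous_on_diff c1 continuous_on_mult continuous_on_const c2)
  qed
  have nonpos: "\<forall>x\<in>{y..z}. phi' x \<le> 0"
  proof
    fix x assume "x \<in> {y..z}"
    then have "x > a0" using y by simp
    then show "phi' x \<le> 0" unfolding phi'_def by (rule sgn)
  qed
  have I1: "((\<lambda>x. - phi' x) has_integral - (phi z - phi y)) {y..z}"
    by (rule has_integral_neg[OF int])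
  have "0 \<le> - (phi z - phi y)"
    by (rule has_integral_nonneg[OF I1]) (use nonpos in simp)
  then have "phi z - phi y \<le> 0" by simp
  then show ?thesis unfolding phi_def by simp
qed

lemma psi_mono:
  fixes f :: "nat \<Rightarrow> real" and p D a0 y z :: real
  assumes nonneg: "\<forall>n. f n \<ge> 0" and f1: "f 1 = 1" and a0: "a0 \<ge> 1"
    and aD: "\<And>x. x > a0 \<Longrightarrow> ln x > D"
    and sgn: "\<And>x. x > a0 \<Longrightarrow> muf f x / x / II f x - p * (1 / x / (ln x - D)) \<ge> 0"
    and y: "a0 < y" and yz: "y \<le> z"
  shows "ln (II f y) - p * ln (ln y - D) \<le> ln (II f z) - p * ln (ln z - D)"
proof -
  define phi where "phi = (\<lambda>x. ln (II f x) - p * ln (ln x - D))"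
  define phi' where "phi' = (\<lambda>x. muf f x / x / II f x - p * (1 / x / (ln x - D)))"
  define S where "S = real ` {0..nat \<lceil>z\<rceil>}"
  have int: "(phi' has_integral (phi z - phi y)) {y..z}"
  proof (rule fundamental_theorem_of_calculus_strong[of S])
    show "finite S" by (simp add: S_def)
    show "y \<le> z" by fact
  next
    fix x assume x: "x \<in> {y..z} - S"
    then have x1: "x > 1" "x > a0" using y a0 by auto
    have "real (nat \<lfloor>x\<rfloor>) \<le> x" using x1 by (intro nat_le_floor) auto
    moreover have "x \<le> z" using x by simp
    then have "\<lfloor>x\<rfloor> \<le> \<lceil>z\<rceil>" using floor_mono[of x z] floor_le_ceiling[of z] by linarith
    then have "nat \<lfloor>x\<rfloor> \<in> {0..nat \<lceil>z\<rceil>}" by (simp add: nat_mono)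
    then have "real (nat \<lfloor>x\<rfloor>) \<noteq> x" using x unfolding S_def by (metis Diff_iff image_eqI)
    ultimately have nonint: "real (nat \<lfloor>x\<rfloor>) < x" by (rule order_le_neq_trans)
    have d: "(II f has_real_derivative muf f x / x) (at x)" by (rule II_deriv[OF x1(1) nonint])
    have "II f x > 0" using II_pos[OF nonneg f1 x1(1)] .
    moreover have "ln x - D > 0" using aD[OF x1(2)] by simp
    ultimately have "(phi has_real_derivative phi' x) (at x)"
      unfolding phi_def phi'_def using x1
      by (auto intro!: derivative_eq_intros d simp: mult.commute)
    then show "(phi has_vector_derivative phi' x) (at x)"
      by (simp add: has_real_derivative_iff_has_vector_derivative)
  next
    have c: "continuous_on {y..z} (II f)" using II_cont[of y z f] y a0 by simp
    have pos: "II f x > 0 \<and> ln x - D > 0 \<and> x > 0" if xx: "x \<in> {y..z}" for x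
    proof -
      have "x > a0" using xx y by simp
      moreover have "x > 1" using \<open>x > a0\<close> a0 by simp
      ultimately show ?thesis using II_pos[OF nonneg f1 \<open>x > 1\<close>] aD[OF \<open>x > a0\<close>] by simp
    qed
    have c1: "continuous_on {y..z} (\<lambda>x. ln (II f x))"
      apply (rule continuous_on_ln[OF c]) using pos by force
    have c0: "continuous_on {y..z} (\<lambda>x. ln x)"
      apply (rule continuous_on_ln[OF continuous_on_id]) using pos by force
    have c2: "continuous_on {y..z} (\<lambda>x. ln (ln x - D))"
      apply (rule continuous_on_ln[OF continuous_on_diff[OF c0 continuous_on_const]]) using pos by force
    show "continuous_on {y..z} phi" unfolding phi_def
      by (intro continuous_on_diff c1 continuous_on_mult continuous_on_const c2)
  qed
  have nonpos: "\<forall>x\<in>{y..z}. phi' x \<ge> 0"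
  proof
    fix x assume "x \<in> {y..z}"
    then have "x > a0" using y by simp
    then show "phi' x \<ge> 0" unfolding phi'_def by (rule sgn)
  qed
  have "0 \<le> phi z - phi y"
    by (rule has_integral_nonneg[OF int]) (use nonpos in simp)
  then show ?thesis unfolding phi_def by simp
qed

lemma part2:
  fixes f :: "nat \<Rightarrow> real" and p Dm Dp a0 :: real
  assumes nonneg: "\<forall>n. f n \<ge> 0" and f1: "f 1 = 1" and p: "p > 0" and a0: "a0 \<ge> 1"
    and aD: "\<And>x. x > a0 \<Longrightarrow> ln x > Dp" and DmDp: "Dm \<le> Dp"
    and R: "\<And>x. x > a0 \<Longrightarrow> Dm * muf f x \<le> muf f x * ln x - p * II f x \<and>
                                muf f x * ln x - p * II f x \<le> Dp * muf f x"
  shows "\<exists>K>0. \<forall>x>a0. p * K * (ln x - Dp) powr p / (ln x - Dm) \<le> muf f x \<and>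
                     muf f x \<le> p * K * (ln x - Dm) powr p / (ln x - Dp)"
proof -
  have aDm: "ln x > Dm" if "x > a0" for x using aD[OF that] DmDp by simp
  have IIpos: "II f x > 0" if "x > a0" for x using II_pos[OF nonneg f1] that a0 by simp
  have sgn_dec: "muf f x / x / II f x - p * (1 / x / (ln x - Dp)) \<le> 0" if x: "x > a0" for x
  proof (rule deriv_sign_dec)
    show "x > 0" "II f x > 0" "ln x - Dp > 0" using x a0 IIpos[OF x] aD[OF x] by auto
    have "muf f x * ln x - p * II f x \<le> Dp * muf f x" using R[OF x] by simp
    then show "muf f x * (ln x - Dp) \<le> p * II f x" by (simp add: algebra_simps)
  qed
  have sgn_inc: "muf f x / x / II f x - p * (1 / x / (ln x - Dm)) \<ge> 0" if x: "x > a0" for x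
  proof (rule deriv_sign_inc)
    show "x > 0" "II f x > 0" "ln x - Dm > 0" using x a0 IIpos[OF x] aDm[OF x] by auto
    have "Dm * muf f x \<le> muf f x * ln x - p * II f x" using R[OF x] by simp
    then show "muf f x * (ln x - Dm) \<ge> p * II f x" by (simp add: algebra_simps)
  qed
  define phi where "phi = (\<lambda>x. ln (II f x) - p * ln (ln x - Dp))"
  define psi where "psi = (\<lambda>x. ln (II f x) - p * ln (ln x - Dm))"
  have phi_dec: "phi z \<le> phi y" if "a0 < y" "y \<le> z" for y z
    unfolding phi_def by (rule phi_mono[OF nonneg f1 a0 aD sgn_dec that])
  have psi_inc: "psi y \<le> psi z" if "a0 < y" "y \<le> z" for y z
    unfolding psi_def by (rule psi_mono[OF nonneg f1 a0 aDm sgn_inc that])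
  have psi_phi: "psi x \<le> phi x" if x: "x > a0" for x
  proof -
    have "ln (ln x - Dp) \<le> ln (ln x - Dm)" using aD[OF x] DmDp by simp
    then have "p * ln (ln x - Dp) \<le> p * ln (ln x - Dm)" using p by simp
    then show ?thesis unfolding phi_def psi_def by simp
  qed
  have psi_le_phi: "psi x \<le> phi z" if "x > a0" "z > a0" for x z
  proof (cases "x \<le> z")
    case True
    then show ?thesis using psi_inc[of x z] psi_phi[of z] that by simp
  next
    case False
    then show ?thesis using phi_dec[of z x] psi_phi[of x] that by simp
  qed
  define k where "k = Inf (phi ` {a0<..})"
  have bdd: "bdd_below (phi ` {a0<..})"
    by (rule bdd_belowI[of _ "psi (a0+1)"]) (use psi_le_phi in auto)
  have k_le: "k \<le> phi x" if "x > a0" for x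
    unfolding k_def by (rule cInf_lower[OF _ bdd]) (use that in auto)
  have k_ge: "psi x \<le> k" if "x > a0" for x
    unfolding k_def by (rule cInf_greatest) (use that psi_le_phi in auto)
  define K where "K = exp k"
  have Kpos: "K > 0" unfolding K_def by simp
  have lower: "K * (ln x - Dp) powr p \<le> II f x" if x: "x > a0" for x
  proof -
    have L: "ln x - Dp > 0" using aD[OF x] by simp
    have "K \<le> exp (phi x)" unfolding K_def using k_le[OF x] by simp
    also have "exp (phi x) = II f x / (ln x - Dp) powr p"
      unfolding phi_def using IIpos[OF x] L by (simp add: exp_diff powr_def)
    finally show ?thesis using L by (simp add: pos_le_divide_eq)
  qed
  have upper: "II f x \<le> K * (ln x - Dm) powr p" if x: "x > a0" for x
  proof -
    have L: "ln x - Dm > 0" using aDm[OF x] by simp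
    have "II f x / (ln x - Dm) powr p = exp (psi x)"
      unfolding psi_def using IIpos[OF x] L by (simp add: exp_diff powr_def)
    also have "\<dots> \<le> K" unfolding K_def using k_ge[OF x] by simp
    finally show ?thesis using L by (simp add: pos_divide_le_eq)
  qed
  show ?thesis
  proof (intro exI[of _ K] conjI allI impI Kpos)
    fix x assume x: "x > a0"
    have L1: "ln x - Dm > 0" using aDm[OF x] by simp
    have L2: "ln x - Dp > 0" using aD[OF x] by simp
    have "p * II f x \<le> muf f x * (ln x - Dm)" using R[OF x] by (simp add: algebra_simps)
    moreover have "p * (K * (ln x - Dp) powr p) \<le> p * II f x" using lower[OF x] p by simp
    ultimately have "p * K * (ln x - Dp) powr p \<le> muf f x * (ln x - Dm)" by simp
    then show "p * K * (ln x - Dp) powr p / (ln x - Dm) \<le> muf f x"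
      using L1 by (simp add: pos_divide_le_eq)
    have "muf f x * (ln x - Dp) \<le> p * II f x" using R[OF x] by (simp add: algebra_simps)
    moreover have "p * II f x \<le> p * (K * (ln x - Dm) powr p)" using upper[OF x] p by simp
    ultimately have "muf f x * (ln x - Dp) \<le> p * K * (ln x - Dm) powr p" by simp
    then show "muf f x \<le> p * K * (ln x - Dm) powr p / (ln x - Dp)"
      using L2 by (simp add: pos_le_divide_eq)
  qed
qed

lemma R_identity:
  fixes f Lam :: "nat \<Rightarrow> real" and tau B x :: real
  assumes Lam: "\<forall>n\<ge>1. f n * ln (real n) = (\<Sum>d | d dvd n. f d * Lam (n div d))"
    and x: "x \<ge> 1"
  shows "B * muf f x + (\<Sum>n\<in>{1..nat \<lfloor>x\<rfloor>}. f n / real n * Ef Lam tau B (x / real n))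
         = muf f x * ln x - (1 + tau) * II f x"
proof -
  define N where "N = nat \<lfloor>x\<rfloor>"
  define S where "S = (\<lambda>n. \<Sum>m\<in>{1..N div n}. Lam m / real m)"
  have trm: "f n / real n * Ef Lam tau B (x / real n) =
      f n / real n * S n - tau * (f n / real n * (ln x - ln (real n))) - B * (f n / real n)"
    if n: "n \<in> {1..N}" for n
  proof -
    have fl: "nat \<lfloor>x / real n\<rfloor> = N div n" unfolding N_def using x n by (intro nat_floor_div) auto
    have l: "ln (x / real n) = ln x - ln (real n)" using x n by (intro ln_divide_pos) auto
    show ?thesis unfolding Ef_def S_def fl l by (simp add: algebra_simps)
  qed
  have "(\<Sum>n\<in>{1..N}. f n / real n * Ef Lam tau B (x / real n)) =
        (\<Sum>n\<in>{1..N}. f n / real n * S n - tau * (f n / real n * (ln x - ln (real n))) - B * (f n / real n))"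
    by (rule sum.cong[OF refl trm])
  also have "\<dots> = (\<Sum>n\<in>{1..N}. f n / real n * S n) - tau * II f x - B * muf f x"
    unfolding II_def muf_def N_def[symmetric] by (simp add: sum_subtractf sum_distrib_left)
  finally have e: "(\<Sum>n\<in>{1..N}. f n / real n * Ef Lam tau B (x / real n)) =
        (\<Sum>n\<in>{1..N}. f n / real n * S n) - tau * II f x - B * muf f x" .
  have "muf f x * ln x - II f x =
     (\<Sum>n\<in>{1..N}. f n / real n * ln x - f n / real n * (ln x - ln (real n)))"
    unfolding II_def muf_def N_def[symmetric] by (simp only: sum_subtractf sum_distrib_right)
  also have "\<dots> = (\<Sum>n\<in>{1..N}. f n / real n * ln (real n))"
    by (intro sum.cong) (simp_all add: algebra_simps)
  finally have T: "muf f x * ln x - II f x = (\<Sum>n\<in>{1..N}. f n / real n * ln (real n))" .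
  have H: "(\<Sum>n\<in>{1..N}. f n / real n * ln (real n)) = (\<Sum>n\<in>{1..N}. f n / real n * S n)"
    unfolding S_def by (rule hyperbola[OF Lam])
  show ?thesis unfolding N_def[symmetric] e using T H by (simp add: algebra_simps)
qed

lemma exp_ind_integral:
  fixes c :: real
  assumes c: "c \<ge> 0"
  shows "((\<lambda>v. if c \<le> v then exp (-v) else 0) has_integral exp (-c)) {0..}"
proof -
  have "((\<lambda>x. exp (- 1 * x)) has_integral exp (- 1 * c) / 1) {c..}"
    by (rule has_integral_exp_minus_to_infinity) simp
  then have "((\<lambda>x. exp (- x)) has_integral exp (- c)) {c..}" by simp
  then have "((\<lambda>v. if v \<in> {c..} then exp (-v) else 0) has_integral exp (-c)) {0..}"
    using c by (subst has_integral_restrict) auto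
  then show ?thesis by simp
qed

lemma ind_iff:
  fixes sg v :: real
  assumes s: "sg > 0" and m: "m \<ge> 1"
  shows "sg * ln (real m) \<le> v \<longleftrightarrow> m \<le> nat \<lfloor>exp (v / sg)\<rfloor>"
proof -
  have "sg * ln (real m) \<le> v \<longleftrightarrow> ln (real m) \<le> v / sg"
    using s by (simp add: pos_le_divide_eq mult.commute)
  also have "\<dots> \<longleftrightarrow> real m \<le> exp (v / sg)"
  proof -
    have "exp (ln (real m)) = real m" using m by simp
    then show ?thesis by (metis exp_le_cancel_iff)
  qed
  also have "\<dots> \<longleftrightarrow> m \<le> nat \<lfloor>exp (v / sg)\<rfloor>"
  proof
    assume "real m \<le> exp (v / sg)" then show "m \<le> nat \<lfloor>exp (v / sg)\<rfloor>" by (rule le_nat_floor)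
  next
    assume "m \<le> nat \<lfloor>exp (v / sg)\<rfloor>" then show "real m \<le> exp (v / sg)"
      by (rule nat_le_floor) simp
  qed
  finally show ?thesis .
qed

definition PS :: "(nat \<Rightarrow> real) \<Rightarrow> real \<Rightarrow> nat \<Rightarrow> real \<Rightarrow> real" where
  "PS f sg N v = (\<Sum>m\<in>{1..N}. f m / real m * (if sg * ln (real m) \<le> v then exp (-v) else 0))"

lemma PS_eq:
  assumes s: "sg > 0"
  shows "PS f sg N v = (\<Sum>m\<in>{1..N} \<inter> {1..nat \<lfloor>exp (v / sg)\<rfloor>}. f m / real m) * exp (-v)"
proof -
  have "PS f sg N v = (\<Sum>m\<in>{1..N}. (if m \<in> {1..nat \<lfloor>exp (v / sg)\<rfloor>} then f m / real m else 0) * exp (-v))"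
    unfolding PS_def
  proof (intro sum.cong refl)
    fix m assume m: "m \<in> {1..N}"
    then have m1: "m \<ge> 1" by simp
    show "f m / real m * (if sg * ln (real m) \<le> v then exp (- v) else 0) =
          (if m \<in> {1..nat \<lfloor>exp (v / sg)\<rfloor>} then f m / real m else 0) * exp (- v)"
      using ind_iff[OF s m1, of v] m1 by simp
  qed
  also have "\<dots> = (\<Sum>m\<in>{1..N}. (if m \<in> {1..nat \<lfloor>exp (v / sg)\<rfloor>} then f m / real m else 0)) * exp (-v)"
    by (simp add: sum_distrib_right)
  also have "(\<Sum>m\<in>{1..N}. (if m \<in> {1..nat \<lfloor>exp (v / sg)\<rfloor>} then f m / real m else 0)) =
             (\<Sum>m\<in>{1..N} \<inter> {1..nat \<lfloor>exp (v / sg)\<rfloor>}. f m / real m)"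
    by (rule sum.inter_restrict[symmetric]) simp
  finally show ?thesis .
qed

lemma PS_le:
  assumes s: "sg > 0" and nonneg: "\<forall>n. f n \<ge> 0"
  shows "PS f sg N v \<le> muf f (exp (v / sg)) * exp (-v)" "PS f sg N v \<ge> 0"
proof -
  have "(\<Sum>m\<in>{1..N} \<inter> {1..nat \<lfloor>exp (v / sg)\<rfloor>}. f m / real m) \<le> muf f (exp (v / sg))"
    unfolding muf_def by (rule sum_mono2) (auto simp: nonneg)
  then show "PS f sg N v \<le> muf f (exp (v / sg)) * exp (-v)"
    unfolding PS_eq[OF s] by (simp add: mult_right_mono)
  have "(\<Sum>m\<in>{1..N} \<inter> {1..nat \<lfloor>exp (v / sg)\<rfloor>}. f m / real m) \<ge> 0"
    by (rule sum_nonneg) (auto simp: nonneg)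
  then show "PS f sg N v \<ge> 0" unfolding PS_eq[OF s] by simp
qed

lemma PS_eventually:
  assumes s: "sg > 0"
  shows "eventually (\<lambda>N. PS f sg N v = muf f (exp (v / sg)) * exp (-v)) sequentially"
proof (rule eventually_sequentiallyI[of "nat \<lfloor>exp (v / sg)\<rfloor>"])
  fix N assume N: "nat \<lfloor>exp (v / sg)\<rfloor> \<le> N"
  then have eq: "{1..N} \<inter> {1..nat \<lfloor>exp (v / sg)\<rfloor>} = {1..nat \<lfloor>exp (v / sg)\<rfloor>}" by auto
  show "PS f sg N v = muf f (exp (v / sg)) * exp (-v)"
    unfolding PS_eq[OF s] eq muf_def ..
qed

lemma PS_integral:
  assumes s: "sg > 0"
  shows "(PS f sg N has_integral (\<Sum>m\<in>{1..N}. f m / real m powr (1 + sg))) {0..}"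
proof -
  have "((\<lambda>v. \<Sum>m\<in>{1..N}. f m / real m * (if sg * ln (real m) \<le> v then exp (-v) else 0))
        has_integral (\<Sum>m\<in>{1..N}. f m / real m * exp (- (sg * ln (real m))))) {0..}"
  proof (rule has_integral_sum)
    fix m assume m: "m \<in> {1..N}"
    have "sg * ln (real m) \<ge> 0" using m s by auto
    then show "((\<lambda>v. f m / real m * (if sg * ln (real m) \<le> v then exp (-v) else 0))
        has_integral (f m / real m * exp (- (sg * ln (real m))))) {0..}"
      by (intro has_integral_mult_right exp_ind_integral)
  qed simp
  moreover note this
  have "f m / real m * exp (- (sg * ln (real m))) = f m / real m powr (1 + sg)"
    if m: "m \<in> {1..N}" for m
  proof -
    have "real m powr (1 + sg) = real m * exp (sg * ln (real m))"
      using m by (simp add: powr_def exp_add distrib_right)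
    then show ?thesis by (simp add: exp_minus field_simps)
  qed
  then have eq2: "(\<Sum>m\<in>{1..N}. f m / real m * exp (- (sg * ln (real m)))) =
     (\<Sum>m\<in>{1..N}. f m / real m powr (1 + sg))" by (rule sum.cong[OF refl])
  have eq3: "PS f sg N = (\<lambda>v. \<Sum>m\<in>{1..N}. f m / real m * (if sg * ln (real m) \<le> v then exp (-v) else 0))"
    by (rule ext) (simp only: PS_def)
  show ?thesis unfolding eq3 eq2[symmetric] by fact
qed

lemma abel:
  fixes f :: "nat \<Rightarrow> real" and tau L0 :: real
  assumes nonneg: "\<forall>n. f n \<ge> 0" and tau: "tau > 0"
    and lim: "((\<lambda>u. muf f (exp u) / u powr tau) \<longlongrightarrow> L0) at_top"
  shows "((\<lambda>s. (s - 1) powr tau * Lser f s) \<longlongrightarrow> Gamma (tau + 1) * L0) (at_right 1)"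
proof -
  define Bc where "Bc = \<bar>L0\<bar> + 1"
  have Bc0: "Bc \<ge> 0" by (simp add: Bc_def)
  have "eventually (\<lambda>u. muf f (exp u) / u powr tau < L0 + 1) at_top"
    using lim by (rule order_tendstoD) simp
  then obtain U0 where U0: "\<And>u. u \<ge> U0 \<Longrightarrow> muf f (exp u) / u powr tau < L0 + 1"
    by (auto simp: eventually_at_top_linorder)
  define U1 where "U1 = max U0 1"
  define A where "A = muf f (exp U1)"
  have A0: "A \<ge> 0" using mu_nonneg[OF nonneg] by (simp add: A_def)
  have bound: "muf f (exp u) \<le> A + Bc * u powr tau" if u: "u \<ge> 0" for u
  proof (cases "u \<ge> U1")
    case True
    then have u1: "u > 0" "u \<ge> U0" by (auto simp: U1_def)
    have up: "u powr tau > 0" using u1 by simp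
    have "muf f (exp u) < (L0+1) * u powr tau" using U0[OF u1(2)] up by (simp add: divide_less_eq)
    also have "\<dots> \<le> Bc * u powr tau" using up by (intro mult_right_mono) (auto simp: Bc_def)
    finally show ?thesis using A0 by simp
  next
    case False
    then have "muf f (exp u) \<le> A" unfolding A_def by (intro mu_mono[OF nonneg]) simp
    moreover have "Bc * u powr tau \<ge> 0" using Bc0 by simp
    ultimately show ?thesis by simp
  qed
  define h where "h = (\<lambda>v::real. A * exp (- v) + Bc * (v powr tau / exp v))"
  have h_int: "h integrable_on {0..}"
  proof -
    have "((\<lambda>x::real. exp (- 1 * x)) has_integral exp (- 1 * 0) / 1) {0..}"
      by (rule has_integral_exp_minus_to_infinity) simp
    then have "(\<lambda>x::real. exp (- x)) integrable_on {0..}" by (auto simp: integrable_on_def)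
    moreover have "(\<lambda>t. t powr (tau + 1 - 1) / exp t) integrable_on {0..}"
      using Gamma_integral_real[of "tau+1"] tau by (auto simp: integrable_on_def)
    then have "(\<lambda>t. t powr tau / exp t) integrable_on {0..}" by simp
    ultimately show ?thesis unfolding h_def
      by (intro integrable_add integrable_on_mult_right)
  qed
  define G where "G = (\<lambda>sg v. sg powr tau * muf f (exp (v / sg)) * exp (- v))"
  have G_bound: "G sg v \<le> h v" "G sg v \<ge> 0" if sg: "0 < sg" "sg \<le> 1" and v: "v \<ge> 0" for sg v
  proof -
    have sp: "sg powr tau > 0" "sg powr tau \<le> 1" using sg tau by (auto intro: powr_le1)
    have "sg powr tau * muf f (exp (v / sg)) \<le> sg powr tau * (A + Bc * (v / sg) powr tau)"
      using bound[of "v / sg"] sg v sp by (intro mult_left_mono) auto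
    also have "\<dots> = sg powr tau * A + Bc * v powr tau"
      using sp by (simp add: powr_divide algebra_simps)
    also have "\<dots> \<le> A + Bc * v powr tau" using sp A0 by (simp add: mult_left_le_one_le)
    finally have "sg powr tau * muf f (exp (v / sg)) * exp (-v) \<le> (A + Bc * v powr tau) * exp (-v)"
      by (intro mult_right_mono) auto
    then show "G sg v \<le> h v" unfolding G_def h_def by (simp add: exp_minus field_simps)
    show "G sg v \<ge> 0" unfolding G_def using sp mu_nonneg[OF nonneg] by simp
  qed
  have Lrep: "G sg integrable_on {0..} \<and> sg powr tau * Lser f (1 + sg) = integral {0..} (G sg)"
    if sg: "0 < sg" "sg \<le> 1" for sg
  proof -
    define P where "P = (\<lambda>N v. sg powr tau * PS f sg N v)"
    have Pint: "(P N has_integral sg powr tau * (\<Sum>m\<in>{1..N}. f m / real m powr (1 + sg))) {0..}" for N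
      unfolding P_def by (intro has_integral_mult_right PS_integral sg)
    have Pb: "norm (P N v) \<le> h v" if v: "v \<in> {0..}" for N v
    proof -
      have sp: "sg powr tau > 0" using sg by simp
      have "0 \<le> P N v" unfolding P_def using PS_le(2)[OF sg(1) nonneg] sp by simp
      moreover have "P N v \<le> G sg v" unfolding P_def G_def
        using PS_le(1)[OF sg(1) nonneg, of N v] sp by (simp add: mult.assoc)
      ultimately show ?thesis using G_bound(1)[OF sg, of v] v by simp
    qed
    have Pc: "(\<lambda>N. P N v) \<longlonglongrightarrow> G sg v" for v
    proof (rule tendsto_eventually)
      show "eventually (\<lambda>N. P N v = G sg v) sequentially"
        using PS_eventually[OF sg(1), of f v] by eventually_elim (simp add: P_def G_def mult.assoc)
    qed
    have DC: "G sg integrable_on {0..}" "(\<lambda>N. integral {0..} (P N)) \<longlonglongrightarrow> integral {0..} (G sg)"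
      using dominated_convergence[of P "{0..}" h "G sg", OF _ h_int Pb Pc] Pint
      by (auto simp: integrable_on_def)
    define a where "a = (\<lambda>n. f (Suc n) / real (Suc n) powr (1 + sg))"
    have "integral {0..} (P N) = sg powr tau * (\<Sum>n<N. a n)" for N
      using Pint[of N] unfolding a_def by (simp add: integral_unique sum.atLeast1_atMost_eq)
    then have "(\<lambda>N. sg powr tau * (\<Sum>n<N. a n)) \<longlonglongrightarrow> integral {0..} (G sg)" using DC(2) by simp
    then have "(\<lambda>N. inverse (sg powr tau) * (sg powr tau * (\<Sum>n<N. a n))) \<longlonglongrightarrow>
               inverse (sg powr tau) * integral {0..} (G sg)" by (rule tendsto_mult_left)
    moreover have "(\<lambda>N. inverse (sg powr tau) * (sg powr tau * (\<Sum>n<N. a n))) = (\<lambda>N. (\<Sum>n<N. a n))"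
      using sg by (intro ext) simp
    ultimately have "(\<lambda>N. (\<Sum>n<N. a n)) \<longlonglongrightarrow> inverse (sg powr tau) * integral {0..} (G sg)"
      by simp
    then have "a sums (inverse (sg powr tau) * integral {0..} (G sg))" by (simp add: sums_def)
    then have "Lser f (1 + sg) = inverse (sg powr tau) * integral {0..} (G sg)"
      unfolding Lser_def a_def[symmetric] by (rule sums_unique[symmetric])
    then show ?thesis using DC(1) sg by simp
  qed
  show ?thesis
  proof (rule tendsto_at_right_sequentially[of 1 2])
    show "(1::real) < 2" by simp
  next
    fix S :: "nat \<Rightarrow> real"
    assume S1: "\<And>n. 1 < S n" and S2: "\<And>n. S n < 2" and Slim: "S \<longlonglongrightarrow> 1"
    define sg where "sg = (\<lambda>n. S n - 1)"
    have sg0: "0 < sg n" "sg n \<le> 1" for n using S1[of n] S2[of n] by (auto simp: sg_def)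
    have sglim: "sg \<longlonglongrightarrow> 0" unfolding sg_def using tendsto_diff[OF Slim tendsto_const[of 1]] by simp
    define gl where "gl = (\<lambda>v::real. L0 * (v powr tau / exp v))"
    have glint: "(gl has_integral (L0 * Gamma (tau + 1))) {0..}"
      unfolding gl_def using Gamma_integral_real[of "tau+1"] tau by (intro has_integral_mult_right) simp
    have conv: "(\<lambda>k. G (sg k) v) \<longlonglongrightarrow> gl v" if v: "v \<in> {0..}" for v
    proof (cases "v = 0")
      case True
      have "(\<lambda>k. sg k powr tau) \<longlonglongrightarrow> 0"
      proof (rule tendsto_zero_powrI[OF sglim tendsto_const])
        show "\<forall>\<^sub>F k in sequentially. 0 \<le> sg k"
          by (rule always_eventually) (use sg0 less_imp_le in blast)
      qed (use tau in simp)
      then have "(\<lambda>k. sg k powr tau * muf f 1) \<longlonglongrightarrow> 0 * muf f 1" by (rule tendsto_mult_right)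
      then show ?thesis unfolding G_def gl_def using True tau by simp
    next
      case False
      then have v0: "v > 0" using v by simp
      have "filterlim sg (at_right 0) sequentially"
        using sglim sg0 by (intro tendsto_imp_filterlim_at_right) (auto intro: always_eventually)
      then have "filterlim (\<lambda>k. inverse (sg k)) at_top sequentially"
        by (rule filterlim_compose[OF filterlim_inverse_at_top_right])
      then have ulim: "filterlim (\<lambda>k. v * inverse (sg k)) at_top sequentially"
        using v0 by (intro filterlim_tendsto_pos_mult_at_top[OF tendsto_const]) auto
      have "(\<lambda>k. muf f (exp (v * inverse (sg k))) / (v * inverse (sg k)) powr tau) \<longlonglongrightarrow> L0"
        by (rule filterlim_compose[OF lim ulim])
      then have "(\<lambda>k. v powr tau * (muf f (exp (v * inverse (sg k))) / (v * inverse (sg k)) powr tau) * exp (-v))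
                  \<longlonglongrightarrow> v powr tau * L0 * exp (-v)"
        by (intro tendsto_intros)
      moreover have "v powr tau * (muf f (exp (v * inverse (sg k))) / (v * inverse (sg k)) powr tau) * exp (-v)
                     = G (sg k) v" for k
      proof -
        have s: "sg k > 0" using sg0 by simp
        have "(v * inverse (sg k)) powr tau = v powr tau / sg k powr tau"
          using s v0 by (simp add: powr_mult powr_divide divide_inverse inverse_powr)
        then show ?thesis unfolding G_def using s v0 by (simp add: field_simps)
      qed
      moreover have "v powr tau * L0 * exp (-v) = gl v" unfolding gl_def by (simp add: exp_minus field_simps)
      ultimately show ?thesis by simp
    qed
    have Gb: "norm (G (sg k) v) \<le> h v" if "v \<in> {0..}" for k v
      using G_bound[OF sg0(1)[of k] sg0(2)[of k]] that by simp
    have DC: "(\<lambda>k. integral {0..} (G (sg k))) \<longlonglongrightarrow> integral {0..} gl"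
      using dominated_convergence(2)[of "\<lambda>k. G (sg k)" "{0..}" h gl, OF _ h_int Gb conv]
        Lrep sg0 by blast
    have "integral {0..} (G (sg k)) = (S k - 1) powr tau * Lser f (S k)" for k
      using Lrep[OF sg0(1)[of k] sg0(2)[of k]] by (simp add: sg_def)
    moreover have "integral {0..} gl = Gamma (tau + 1) * L0" using glint by (simp add: integral_unique mult.commute)
    ultimately show "(\<lambda>n. (S n - 1) powr tau * Lser f (S n)) \<longlonglongrightarrow> Gamma (tau + 1) * L0"
      using DC by simp
  qed
qed

lemma conv_form:
  fixes L t D1 D2 c :: real
  assumes L: "L > 0" and D2: "L - D2 > 0"
  shows "c * L powr t * (1 - D1 / L) powr (t + 1) / (1 - D2 / L) = c * (L - D1) powr (t + 1) / (L - D2)"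
proof -
  have "1 - D1 / L = (L - D1) / L" using L by (simp add: field_simps)
  moreover have "1 - D2 / L = (L - D2) / L" using L by (simp add: field_simps)
  moreover have "L powr (t + 1) = L powr t * L" using L by (simp add: powr_add)
  moreover have "L powr t > 0" using L by simp
  ultimately show ?thesis using L D2 by (simp add: powr_divide field_simps)
qed

theorem lemma2:
  fixes f Lam :: "nat \<Rightarrow> real" and tau B Dm Dp x0 :: real
  assumes mult: "multiplicative f"
    and nonneg: "\<forall>n. f n \<ge> 0"
    and tau: "tau > 0"
    and Lam: "\<forall>n\<ge>1. f n * ln (real n) = (\<Sum>d | d dvd n. f d * Lam (n div d))"
    and hyp: "\<forall>x\<ge>x0.
       Dm * muf f x \<le> B * muf f x + (\<Sum>n\<in>{1..nat \<lfloor>x\<rfloor>}. f n / real n * Ef Lam tau B (x / real n))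
     \<and> B * muf f x + (\<Sum>n\<in>{1..nat \<lfloor>x\<rfloor>}. f n / real n * Ef Lam tau B (x / real n)) \<le> Dp * muf f x"
  shows "\<exists>C. ((\<lambda>s. (s - 1) powr tau * Lser f s) \<longlongrightarrow> Gamma tau * C) (at_right 1)
    \<and> (\<forall>x. x > max x0 (exp Dp) \<and> x > 1 \<longrightarrow>
         C / tau * ln x powr tau * (1 - Dp / ln x) powr (tau + 1) / (1 - Dm / ln x) \<le> muf f x
       \<and> muf f x \<le> C / tau * ln x powr tau * (1 - Dm / ln x) powr (tau + 1) / (1 - Dp / ln x))"
proof -
  have f1: "f 1 = 1" using mult by (simp add: multiplicative_def)
  define a0 where "a0 = max (max x0 (exp Dp)) 1"
  define p where "p = 1 + tau"
  have p0: "p > 0" using tau by (simp add: p_def)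
  have a0: "a0 \<ge> 1" by (simp add: a0_def)
  have aD: "ln x > Dp" if x: "x > a0" for x
  proof -
    have "x > 0" "exp Dp < x" using x a0 by (auto simp: a0_def)
    then have "exp Dp < exp (ln x)" by simp
    then show ?thesis by simp
  qed
  have R: "Dm * muf f x \<le> muf f x * ln x - p * II f x \<and> muf f x * ln x - p * II f x \<le> Dp * muf f x"
    if x: "x > a0" for x
  proof -
    have "x \<ge> x0" "x \<ge> 1" using x by (auto simp: a0_def)
    then show ?thesis using hyp R_identity[OF Lam \<open>x \<ge> 1\<close>, of B tau] unfolding p_def by auto
  qed
  have DmDp: "Dm \<le> Dp"
  proof -
    have x: "a0 + 1 > a0" by simp
    have "muf f (a0 + 1) \<ge> 1" using mu_ge1[OF nonneg f1] a0 by simp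
    moreover have "Dm * muf f (a0 + 1) \<le> Dp * muf f (a0 + 1)" using R[OF x] by linarith
    ultimately show ?thesis by simp
  qed
  obtain K where K: "K > 0" and Kb: "\<And>x. x > a0 \<Longrightarrow> p * K * (ln x - Dp) powr p / (ln x - Dm) \<le> muf f x \<and>
                     muf f x \<le> p * K * (ln x - Dm) powr p / (ln x - Dp)"
    using part2[OF nonneg f1 p0 a0 aD DmDp R] by blast
  have lim: "((\<lambda>u. muf f (exp u) / u powr tau) \<longlongrightarrow> p * K) at_top"
  proof (rule real_tendsto_sandwich)
    have r1: "((\<lambda>u::real. (u - Dp) powr (tau+1) / ((u - Dm) * u powr tau)) \<longlongrightarrow> 1) at_top"
      by real_asymp
    have r2: "((\<lambda>u::real. (u - Dm) powr (tau+1) / ((u - Dp) * u powr tau)) \<longlongrightarrow> 1) at_top"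
      by real_asymp
    show "((\<lambda>u. p * K * ((u - Dp) powr (tau+1) / ((u - Dm) * u powr tau))) \<longlongrightarrow> p * K) at_top"
      using tendsto_mult_left[OF r1, of "p * K"] by simp
    show "((\<lambda>u. p * K * ((u - Dm) powr (tau+1) / ((u - Dp) * u powr tau))) \<longlongrightarrow> p * K) at_top"
      using tendsto_mult_left[OF r2, of "p * K"] by simp
    have ev: "eventually (\<lambda>u. u > ln a0) at_top" by (rule eventually_gt_at_top)
    show "eventually (\<lambda>u. p * K * ((u - Dp) powr (tau+1) / ((u - Dm) * u powr tau)) \<le> muf f (exp u) / u powr tau) at_top"
      using ev
    proof eventually_elim
      case (elim u)
      have x: "exp u > a0" using elim a0 by (metis exp_less_cancel_iff exp_ln less_le_trans zero_less_one)
      have u0: "u > 0" using elim a0 by (smt (verit) ln_ge_zero)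
      have up: "u powr tau > 0" using u0 by simp
      have "p * K * (u - Dp) powr p / (u - Dm) \<le> muf f (exp u)" using Kb[OF x] by simp
      then have "p * K * (u - Dp) powr p / (u - Dm) / u powr tau \<le> muf f (exp u) / u powr tau"
        using up by (intro divide_right_mono) auto
      then show ?case by (simp add: p_def add.commute)
    qed
    show "eventually (\<lambda>u. muf f (exp u) / u powr tau \<le> p * K * ((u - Dm) powr (tau+1) / ((u - Dp) * u powr tau))) at_top"
      using ev
    proof eventually_elim
      case (elim u)
      have x: "exp u > a0" using elim a0 by (metis exp_less_cancel_iff exp_ln less_le_trans zero_less_one)
      have u0: "u > 0" using elim a0 by (smt (verit) ln_ge_zero)
      have up: "u powr tau > 0" using u0 by simp
      have "muf f (exp u) \<le> p * K * (u - Dm) powr p / (u - Dp)" using Kb[OF x] by simp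
      then have "muf f (exp u) / u powr tau \<le> p * K * (u - Dm) powr p / (u - Dp) / u powr tau"
        using up by (intro divide_right_mono) auto
      then show ?case by (simp add: p_def add.commute)
    qed
  qed
  have L: "((\<lambda>s. (s - 1) powr tau * Lser f s) \<longlongrightarrow> Gamma (tau + 1) * (p * K)) (at_right 1)"
    by (rule abel[OF nonneg tau lim])
  define C where "C = tau * p * K"
  have GC: "Gamma (tau + 1) * (p * K) = Gamma tau * C"
  proof -
    have "tau \<notin> \<int>\<^sub>\<le>\<^sub>0" using tau nonpos_Ints_nonpos by force
    then show ?thesis unfolding C_def by (simp add: Gamma_plus1)
  qed
  show ?thesis
  proof (intro exI[of _ C] conjI allI impI)
    show "((\<lambda>s. (s - 1) powr tau * Lser f s) \<longlongrightarrow> Gamma tau * C) (at_right 1)" using L GC by simp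
  next
    fix x assume xa: "max x0 (exp Dp) < x \<and> 1 < x"
    then have x: "x > a0" by (simp add: a0_def)
    have Lx: "ln x > 0" using xa by simp
    have l1: "ln x - Dm > 0" "ln x - Dp > 0" using aD[OF x] DmDp by auto
    have Ct: "C / tau = p * K" unfolding C_def using tau by simp
    have e1: "C / tau * ln x powr tau * (1 - Dp / ln x) powr (tau + 1) / (1 - Dm / ln x) =
              p * K * (ln x - Dp) powr p / (ln x - Dm)"
      unfolding Ct p_def using conv_form[OF Lx l1(1), of "p * K" tau Dp] by (simp add: add.commute p_def)
    have e2: "C / tau * ln x powr tau * (1 - Dm / ln x) powr (tau + 1) / (1 - Dp / ln x) =
              p * K * (ln x - Dm) powr p / (ln x - Dp)"
      unfolding Ct p_def using conv_form[OF Lx l1(2), of "p * K" tau Dm] by (simp add: add.commute p_def)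
    show "C / tau * ln x powr tau * (1 - Dp / ln x) powr (tau + 1) / (1 - Dm / ln x) \<le> muf f x"
      unfolding e1 using Kb[OF x] by simp
    show "muf f x \<le> C / tau * ln x powr tau * (1 - Dm / ln x) powr (tau + 1) / (1 - Dp / ln x)"
      unfolding e2 using Kb[OF x] by simp
  qed
qed

end
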